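(* Let $m\geq1$ and for $n\geq 0$ let $h_n$ be the number of $(2m+1)$-historic trees on $n+m$ vertices. Then the exponential generating function $H(x)=\sum_{n\geq0}h_n\frac{x^n}{n!}$ satisfies, as a formal power series, \[ H^{(m+1)}(x)=H(x)^2,\qquad H(0)=H'(0)=\cdots=H^{(m)}(0)=1. \]
   Context: A $(2m+1)$-historic tree on $N$ vertices is a rooted plane tree whose vertices are labelled bijectively by $\{1,\dots,N\}$ with labels increasing along every path from the root to a leaf, such that (root at height $0$) the vertices at heights $2m,3m+1,4m+2,\dots$ (i.e. $2m+j(m+1)$, $j\geq0$), called branchings, have two ordered child slots (left and right), each of which may or may not be occupied, while all other vertices have a single child slot (at most one child). Two such trees are equal if they agree as labelled plane trees, with a single child of a branching distinguished as left or right. *)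

theory Defs
  imports "HOL-Computational_Algebra.Formal_Power_Series"
begin

(* A vertex: label, left child slot, right child slot.
   Non-branching vertices use only the left slot (right slot must be None),
   so a single child of a non-branching vertex is encoded canonically. *)
datatype htree = Node nat "htree option" "htree option"

fun root_label :: "htree \<Rightarrow> nat" where
  "root_label (Node l a b) = l"

fun labels :: "htree \<Rightarrow> nat list" where
  "labels (Node l a b) =
     l # (case a of None \<Rightarrow> [] | Some t \<Rightarrow> labels t)
       @ (case b of None \<Rightarrow> [] | Some t \<Rightarrow> labels t)"

definition branching :: "nat \<Rightarrow> nat \<Rightarrow> bool" where
  "branching m h \<longleftrightarrow> 2*m \<le> h \<and> (h - 2*m) mod (m+1) = 0"

fun hist_shape :: "nat \<Rightarrow> nat \<Rightarrow> htree \<Rightarrow> bool" where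
  "hist_shape m h (Node l a b) =
     ((branching m h \<or> b = None)
      \<and> (case a of None \<Rightarrow> True | Some t \<Rightarrow> l < root_label t \<and> hist_shape m (Suc h) t)
      \<and> (case b of None \<Rightarrow> True | Some t \<Rightarrow> l < root_label t \<and> hist_shape m (Suc h) t))"

definition historic_trees :: "nat \<Rightarrow> nat \<Rightarrow> htree set" where
  "historic_trees m N = {t. hist_shape m 0 t \<and> distinct (labels t) \<and> set (labels t) = {1..N}}"

definition hist_count :: "nat \<Rightarrow> nat \<Rightarrow> nat" where
  "hist_count m n = card (historic_trees m (n + m))"

definition hist_egf :: "nat \<Rightarrow> real fps" where
  "hist_egf m = Abs_fps (\<lambda>n. of_nat (hist_count m n) / fact n)"

end

theory Submission
  imports Defs
begin

function g :: "nat \<Rightarrow> nat \<Rightarrow> nat \<Rightarrow> nat" where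
  "g m h 0 = 0"
| "g m h (Suc n) = (if branching m h
     then (\<Sum>k\<le>n. (n choose k) * (if k = 0 then 1 else g m (Suc h) k)
                               * (if n - k = 0 then 1 else g m (Suc h) (n - k)))
     else (if n = 0 then 1 else g m (Suc h) n))"
  by pat_completeness auto
termination
  by (relation "measure (\<lambda>(m,h,n). n)") auto

lemma g_chain1: "h + n \<le> 2*m \<Longrightarrow> n \<ge> 1 \<Longrightarrow> g m h n = 1"
proof (induction n arbitrary: h)
  case 0 then show ?case by simp
next
  case (Suc n)
  have "\<not> branching m h" using Suc.prems by (simp add: branching_def)
  then show ?case using Suc by auto
qed

lemma g_shift: "h + j \<le> 2*m \<Longrightarrow> k \<ge> 1 \<Longrightarrow> g m h (k + j) = g m (h + j) k"
proof (induction j arbitrary: h)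
  case 0 then show ?case by simp
next
  case (Suc j)
  have "\<not> branching m h" using Suc.prems by (simp add: branching_def)
  then have "g m h (k + Suc j) = g m (Suc h) (k + j)" using Suc.prems by simp
  also have "\<dots> = g m (h + Suc j) k" using Suc by simp
  finally show ?case .
qed

lemma branching_period: "h \<ge> m \<Longrightarrow> branching m (h + (m+1)) = branching m h"
proof -
  assume h: "h \<ge> m"
  show ?thesis
  proof
    assume "branching m (h + (m+1))"
    then have "(h + (m+1) - 2*m) mod (m+1) = 0" "2*m \<le> h + (m+1)" by (auto simp: branching_def)
    then have "(h + 1 - m) mod (m+1) = 0" by (metis add_diff_cancel_left' diff_diff_left mult_2 ordered_cancel_comm_monoid_diff_class.add_diff_assoc2 add.commute h)
    then obtain q where q: "h + 1 - m = (m+1) * q" by auto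
    have "q \<ge> 1" using q h by (cases q) auto
    then have "h = 2*m + (m+1)*(q-1)" using q h by (cases q) (auto simp: algebra_simps)
    then have "h - 2*m = (m+1)*(q-1)" "2*m \<le> h" by simp_all
    then show "branching m h" unfolding branching_def by (metis mod_mult_self1_is_0)
  next
    assume "branching m h"
    then have "2*m \<le> h" "(h - 2*m) mod (m+1) = 0" unfolding branching_def by auto
    then obtain q where "h = 2*m + (m+1)*q"
      by (metis dvd_def le_add_diff_inverse mod_0_imp_dvd)
    then have "h + (m+1) = 2*m + (m+1)*(Suc q)" by simp
    then have "h + (m+1) - 2*m = (m+1) * Suc q" by simp
    then show "branching m (h + (m+1))" unfolding branching_def by (metis mod_mult_self1_is_0 le_add1 \<open>h = _\<close> add.assoc)
  qed
qed

lemma g_period: "h \<ge> m \<Longrightarrow> g m (h + (m+1)) n = g m h n"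
proof (induction m h n rule: g.induct)
  case (1 m h) then show ?case by simp
next
  case (2 m h n)
  have b: "branching m (h + (m+1)) = branching m h" using \<open>m \<le> h\<close> by (rule branching_period)
  have IH1: "\<And>k. branching m h \<Longrightarrow> k \<in> {..n} \<Longrightarrow> k \<noteq> 0 \<Longrightarrow> g m (Suc h + (m+1)) k = g m (Suc h) k"
    using 2 by simp
  have IH2: "\<And>k. branching m h \<Longrightarrow> k \<in> {..n} \<Longrightarrow> n - k \<noteq> 0 \<Longrightarrow> g m (Suc h + (m+1)) (n-k) = g m (Suc h) (n-k)"
    using 2 by simp
  have IH3: "\<not> branching m h \<Longrightarrow> n \<noteq> 0 \<Longrightarrow> g m (Suc h + (m+1)) n = g m (Suc h) n"
    using 2 by simp
  show ?case
  proof (cases "branching m h")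
    case True
    then show ?thesis using b IH1 IH2 by (auto intro!: sum.cong)
  next
    case False
    then show ?thesis using b IH3 by auto
  qed
qed

lemma g_rec:
  assumes "m \<ge> 1"
  shows "g m 0 (n + 2*m + 1) = (\<Sum>k\<le>n. (n choose k) * g m 0 (k+m) * g m 0 (n - k + m))"
proof -
  have D: "(if k = 0 then 1 else g m (Suc (2*m)) k) = g m 0 (k+m)" for k
  proof (cases "k = 0")
    case True then show ?thesis using assms g_chain1[of 0 m m] by simp
  next
    case False
    have e: "Suc (2*m) = m + (m+1)" by simp
    have "g m (Suc (2*m)) k = g m (m + (m+1)) k" by (simp only: e)
    also have "\<dots> = g m m k" by (rule g_period) simp
    also have "\<dots> = g m 0 (k+m)" using g_shift[of 0 m m k] False by simp
    finally show ?thesis using False by simp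
  qed
  have "g m 0 (n + 2*m + 1) = g m 0 ((n+1) + 2*m)" by (simp add: algebra_simps)
  also have "\<dots> = g m (2*m) (Suc n)" using g_shift[of 0 "2*m" m "n+1"] by simp
  also have "\<dots> = (\<Sum>k\<le>n. (n choose k) * (if k = 0 then 1 else g m (Suc (2*m)) k)
                               * (if n - k = 0 then 1 else g m (Suc (2*m)) (n - k)))"
  proof -
    have br: "branching m (2*m)" by (simp add: branching_def)
    show ?thesis by (simp only: g.simps(2) br if_True)
  qed
  also have "\<dots> = (\<Sum>k\<le>n. (n choose k) * g m 0 (k+m) * g m 0 (n - k + m))"
    by (simp only: D)
  finally show ?thesis .
qed


lemma sum_Pow_card:
  assumes "finite A"
  shows "(\<Sum>L\<in>Pow A. (f (card L) :: nat)) = (\<Sum>k\<le>card A. (card A choose k) * f k)"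
proof -
  have im: "card ` Pow A \<subseteq> {..card A}" using assms by (auto intro: card_mono)
  have "(\<Sum>L\<in>Pow A. f (card L)) = (\<Sum>k\<le>card A. \<Sum>L\<in>{L. L \<in> Pow A \<and> card L = k}. f (card L))"
    using sum.group[OF _ _ im, of "\<lambda>L. f (card L)"] assms by simp
  also have "\<dots> = (\<Sum>k\<le>card A. (card A choose k) * f k)"
  proof (rule sum.cong[OF refl])
    fix k
    have "(\<Sum>L\<in>{L. L \<in> Pow A \<and> card L = k}. f (card L)) = (\<Sum>L\<in>{L. L \<subseteq> A \<and> card L = k}. f k)"
      by (rule sum.cong) auto
    also have "\<dots> = (card A choose k) * f k" using n_subsets[OF assms, of k] by simp
    finally show "(\<Sum>L\<in>{L. L \<in> Pow A \<and> card L = k}. f (card L)) = (card A choose k) * f k" .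
  qed
  finally show ?thesis .
qed

definition TS :: "nat \<Rightarrow> nat \<Rightarrow> nat set \<Rightarrow> htree set" where
  "TS m h A = {t. hist_shape m h t \<and> distinct (labels t) \<and> set (labels t) = A}"

fun olabels :: "htree option \<Rightarrow> nat list" where
  "olabels None = []"
| "olabels (Some t) = labels t"

definition OT :: "nat \<Rightarrow> nat \<Rightarrow> nat set \<Rightarrow> htree option set" where
  "OT m h L = {x. case x of None \<Rightarrow> L = {} | Some t \<Rightarrow> t \<in> TS m h L}"

lemma labels_Node: "labels (Node l a b) = l # olabels a @ olabels b"
  by (cases a; cases b) auto

declare labels.simps[simp del]
declare labels_Node[simp]

lemma labels_ne: "labels t \<noteq> []"
  by (cases t) simp

lemma root_in: "root_label t \<in> set (labels t)"
  by (cases t) auto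

lemma root_le: "hist_shape m h t \<Longrightarrow> z \<in> set (labels t) \<Longrightarrow> root_label t \<le> z"
proof (induction t arbitrary: h z)
  case (Node l a b)
  show ?case
  proof (cases "z = l")
    case True then show ?thesis by simp
  next
    case False
    then have "z \<in> set (olabels a) \<or> z \<in> set (olabels b)" using Node.prems(2) by (simp add: labels_Node)
    then show ?thesis
    proof
      assume z: "z \<in> set (olabels a)"
      then obtain t where t: "a = Some t" by (cases a) auto
      have "l < root_label t" "hist_shape m (Suc h) t" using Node.prems(1) t by auto
      moreover have "root_label t \<le> z" using Node.IH(1)[of t "Suc h" z] t z calculation by simp
      ultimately show ?thesis by simp
    next
      assume z: "z \<in> set (olabels b)"
      then obtain t where t: "b = Some t" by (cases b) auto
      have "l < root_label t" "hist_shape m (Suc h) t" using Node.prems(1) t by auto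
      moreover have "root_label t \<le> z" using Node.IH(2)[of t "Suc h" z] t z calculation by simp
      ultimately show ?thesis by simp
    qed
  qed
qed

lemma TS_empty: "TS m h {} = {}"
  unfolding TS_def using labels_ne by auto

lemma OT_eq: "OT m h L = (if L = {} then {None} else Some ` TS m h L)"
  unfolding OT_def using TS_empty by (auto split: option.splits)

lemma OT_labels: "x \<in> OT m h L \<Longrightarrow> set (olabels x) = L \<and> distinct (olabels x)"
  unfolding OT_def TS_def by (cases x) auto

lemma OT_child:
  assumes "x \<in> OT m h L" "\<forall>z\<in>L. l < z"
  shows "case x of None \<Rightarrow> True | Some t \<Rightarrow> l < root_label t \<and> hist_shape m h t"
  using assms root_in unfolding OT_def TS_def by (cases x) auto

lemma TS_decomp:
  assumes "finite A" "A \<noteq> {}"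
  defines "a \<equiv> Min A"
  shows "TS m h A = (\<lambda>(x,y). Node a x y) ` (\<Union>L\<in>Pow (A - {a}).
     {(x,y). x \<in> OT m (Suc h) L \<and> y \<in> OT m (Suc h) (A - {a} - L) \<and> (branching m h \<or> y = None)})"
    (is "_ = ?R")
proof
  show "TS m h A \<subseteq> ?R"
  proof
    fix t assume t: "t \<in> TS m h A"
    obtain l x y where tn: "t = Node l x y" by (cases t)
    have sh: "hist_shape m h t" and di: "distinct (labels t)" and se: "set (labels t) = A"
      using t by (auto simp: TS_def)
    have "l = root_label t" unfolding tn by (simp only: root_label.simps)
    then have "l \<in> A" using root_in[of t] se by (simp only:)
    moreover have "\<forall>z\<in>A. l \<le> z" using root_le[OF sh] se tn by auto
    ultimately have "Min A = l" using Min_eqI[OF assms(1), of l] by blast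
    then have la: "l = a" unfolding a_def by simp
    define L where "L = set (olabels x)"
    have dx: "distinct (olabels x)" "distinct (olabels y)" "l \<notin> set (olabels x)" "l \<notin> set (olabels y)"
      "set (olabels x) \<inter> set (olabels y) = {}"
      using di tn by (auto simp: labels_Node)
    have sA: "A = insert l (set (olabels x) \<union> set (olabels y))" using se tn by (simp add: labels_Node)
    have LA: "L \<subseteq> A - {a}" using sA dx la L_def by auto
    have yA: "set (olabels y) = A - {a} - L" using sA dx la L_def by auto
    have "x \<in> OT m (Suc h) L"
      using sh tn dx L_def by (cases x) (auto simp: OT_def TS_def)
    moreover have "y \<in> OT m (Suc h) (A - {a} - L)"
      using sh tn dx yA by (cases y) (auto simp: OT_def TS_def)
    moreover have "branching m h \<or> y = None" using sh tn by auto
    ultimately have mem: "(x, y) \<in> (\<Union>L\<in>Pow (A - {a}).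
     {(x,y). x \<in> OT m (Suc h) L \<and> y \<in> OT m (Suc h) (A - {a} - L) \<and> (branching m h \<or> y = None)})"
      using LA by (intro UN_I[of L]) auto
    show "t \<in> ?R" unfolding tn la by (rule rev_image_eqI[OF mem]) simp
  qed
next
  show "?R \<subseteq> TS m h A"
  proof
    fix t assume "t \<in> ?R"
    then obtain p where p: "p \<in> (\<Union>L\<in>Pow (A - {a}).
     {(x,y). x \<in> OT m (Suc h) L \<and> y \<in> OT m (Suc h) (A - {a} - L) \<and> (branching m h \<or> y = None)})"
      and tp: "t = (\<lambda>(x,y). Node a x y) p" by (rule imageE)
    obtain x y where pxy: "p = (x, y)" by (cases p)
    from p obtain L where L0: "L \<in> Pow (A - {a})" and
      xy: "(x,y) \<in> {(x,y). x \<in> OT m (Suc h) L \<and> y \<in> OT m (Suc h) (A - {a} - L) \<and> (branching m h \<or> y = None)}"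
      unfolding pxy by (rule UN_E)
    have L: "L \<subseteq> A - {a}" using L0 by simp
    have x: "x \<in> OT m (Suc h) L" and y: "y \<in> OT m (Suc h) (A - {a} - L)"
      and br: "branching m h \<or> y = None" using xy by simp_all
    have tn: "t = Node a x y" using tp pxy by simp
    have aA: "a \<in> A" unfolding a_def using assms(1,2) by (rule Min_in)
    have amin: "\<forall>z\<in>A - {a}. a < z"
    proof
      fix z assume z: "z \<in> A - {a}"
      then have "a \<le> z" unfolding a_def using Min_le[OF assms(1)] by simp
      moreover have "a \<noteq> z" using z by simp
      ultimately show "a < z" by simp
    qed
    have cx: "case x of None \<Rightarrow> True | Some t \<Rightarrow> a < root_label t \<and> hist_shape m (Suc h) t"
      using OT_child[OF x] amin L by (meson subsetD)
    have cy: "case y of None \<Rightarrow> True | Some t \<Rightarrow> a < root_label t \<and> hist_shape m (Suc h) t"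
      using OT_child[OF y] amin by (meson Diff_iff)
    have "hist_shape m h t" using br cx cy unfolding tn by (simp only: hist_shape.simps) 
    moreover
    have lx: "set (olabels x) = L" "distinct (olabels x)" using OT_labels[OF x] by simp_all
    have ly: "set (olabels y) = A - {a} - L" "distinct (olabels y)" using OT_labels[OF y] by simp_all
    have "distinct (labels t)" unfolding tn labels_Node using lx ly L by auto
    moreover have "set (labels t) = A" unfolding tn labels_Node using lx ly L aA by auto
    ultimately show "t \<in> TS m h A" by (simp add: TS_def)
  qed
qed

lemma TS_count:
  "finite A \<Longrightarrow> finite (TS m h A) \<and> card (TS m h A) = g m h (card A)"
proof (induction "card A" arbitrary: A h rule: less_induct)
  case less
  show ?case
  proof (cases "A = {}")
    case True then show ?thesis by (simp add: TS_empty)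
  next
    case False
    define a where "a = Min A"
    define A' where "A' = A - {a}"
    have aA: "a \<in> A" using False less.prems a_def by simp
    have fA': "finite A'" using less.prems A'_def by simp
    have cA: "card A = Suc (card A')" using card_Suc_Diff1[OF less.prems aA] A'_def by simp
    define d where "d k = (if k = 0 then 1 else g m (Suc h) k)" for k
    have cOT: "finite (OT m (Suc h) L) \<and> card (OT m (Suc h) L) = d (card L)" if "L \<subseteq> A'" for L
    proof (cases "L = {}")
      case True then show ?thesis by (simp add: OT_eq d_def)
    next
      case False
      have fL: "finite L" using that fA' finite_subset by blast
      have "card L < card A" using that cA fA' by (simp add: card_mono le_imp_less_Suc)
      then have IH: "finite (TS m (Suc h) L) \<and> card (TS m (Suc h) L) = g m (Suc h) (card L)"
        using less.hyps fL by blast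
      then show ?thesis using False fL by (simp add: OT_eq d_def card_image card_eq_0_iff)
    qed
    define S where "S L = {(x,y). x \<in> OT m (Suc h) L \<and> y \<in> OT m (Suc h) (A' - L) \<and> (branching m h \<or> y = None)}" for L
    have dec: "TS m h A = (\<lambda>(x,y). Node a x y) ` (\<Union>L\<in>Pow A'. S L)"
      using TS_decomp[OF less.prems False, of m h] unfolding a_def A'_def S_def by simp
    have inj: "inj_on (\<lambda>(x,y). Node a x y) (\<Union>L\<in>Pow A'. S L)"
      by (auto simp: inj_on_def)
    have finS: "finite (S L)" if "L \<in> Pow A'" for L
    proof -
      have "S L \<subseteq> OT m (Suc h) L \<times> OT m (Suc h) (A' - L)" by (auto simp: S_def)
      moreover have "finite (OT m (Suc h) L \<times> OT m (Suc h) (A' - L))"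
        using cOT[of L] cOT[of "A' - L"] that by auto
      ultimately show ?thesis by (rule finite_subset)
    qed
    have disj: "\<forall>L1\<in>Pow A'. \<forall>L2\<in>Pow A'. L1 \<noteq> L2 \<longrightarrow> S L1 \<inter> S L2 = {}"
      by (auto simp: S_def dest: OT_labels)
    have cardS: "card (S L) = d (card L) * (if branching m h then d (card A' - card L) else (if L = A' then 1 else 0))"
      if "L \<in> Pow A'" for L
    proof (cases "branching m h")
      case True
      then have "S L = OT m (Suc h) L \<times> OT m (Suc h) (A' - L)" by (auto simp: S_def)
      then show ?thesis using True cOT[of L] cOT[of "A' - L"] that fA'
        by (simp add: card_cartesian_product card_Diff_subset finite_subset)
    next
      case False
      have "S L = OT m (Suc h) L \<times> (OT m (Suc h) (A' - L) \<inter> {None})" using False by (auto simp: S_def)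
      also have "\<dots> = (if L = A' then OT m (Suc h) L \<times> {None} else {})"
        using that by (auto simp: OT_eq)
      finally have SL: "S L = (if L = A' then OT m (Suc h) L \<times> {None} else {})" .
      show ?thesis
      proof (cases "L = A'")
        case True
        then have "card (S L) = card (OT m (Suc h) L)" using SL by (simp add: card_cartesian_product)
        then show ?thesis using True False cOT[of L] that by simp
      next
        case F: False
        then show ?thesis using SL False by simp
      qed
    qed
    have finU: "finite (\<Union>L\<in>Pow A'. S L)" using finS fA' by auto
    have "card (TS m h A) = card (\<Union>L\<in>Pow A'. S L)" using dec inj by (simp add: card_image)
    also have "\<dots> = (\<Sum>L\<in>Pow A'. card (S L))" using card_UN_disjoint[of "Pow A'" S] finS disj fA' by simp
    also have "\<dots> = (\<Sum>L\<in>Pow A'. d (card L) * (if branching m h then d (card A' - card L) else (if L = A' then 1 else 0)))"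
      by (rule sum.cong) (simp_all add: cardS)
    also have "\<dots> = g m h (card A)"
    proof (cases "branching m h")
      case True
      have "(\<Sum>L\<in>Pow A'. d (card L) * (if branching m h then d (card A' - card L) else (if L = A' then 1 else 0)))
          = (\<Sum>L\<in>Pow A'. (\<lambda>k. d k * d (card A' - k)) (card L))" using True by simp
      also have "\<dots> = (\<Sum>k\<le>card A'. (card A' choose k) * (d k * d (card A' - k)))"
        by (rule sum_Pow_card[OF fA'])
      also have "\<dots> = g m h (card A)" using True unfolding cA d_def by (simp add: mult.assoc)
      finally show ?thesis .
    next
      case False
      have "(\<Sum>L\<in>Pow A'. d (card L) * (if branching m h then d (card A' - card L) else (if L = A' then 1 else 0)))
          = (\<Sum>L\<in>Pow A'. (if L = A' then d (card L) else 0))" using False by (intro sum.cong) auto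
      also have "\<dots> = d (card A')" using fA' by simp
      also have "\<dots> = g m h (card A)" using False unfolding cA d_def by simp
      finally show ?thesis .
    qed
    finally show ?thesis using dec finU by simp
  qed
qed

lemma hist_count_g: "hist_count m n = g m 0 (n + m)"
  unfolding hist_count_def historic_trees_def using TS_count[of "{1..n+m}" m 0]
  by (simp add: TS_def)

lemma deriv_egf: "(fps_deriv ^^ k) (Abs_fps (\<lambda>n. (a n :: real) / fact n)) = Abs_fps (\<lambda>n. a (n+k) / fact n)"
proof (induction k)
  case 0 then show ?case by simp
next
  case (Suc k)
  have "(fps_deriv ^^ Suc k) (Abs_fps (\<lambda>n. (a n :: real) / fact n)) = fps_deriv ((fps_deriv ^^ k) (Abs_fps (\<lambda>n. (a n :: real) / fact n)))"
    by simp
  also have "\<dots> = fps_deriv (Abs_fps (\<lambda>n. a (n+k) / fact n))" by (simp only: Suc)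
  also have "\<dots> = Abs_fps (\<lambda>n. a (n + Suc k) / fact n)"
  proof (rule fps_ext)
    fix n
    have "fact (Suc n) = (real (n+1)) * (fact n :: real)" by simp
    then show "fps_nth (fps_deriv (Abs_fps (\<lambda>n. a (n+k) / fact n))) n = fps_nth (Abs_fps (\<lambda>n. a (n + Suc k) / fact n)) n"
      by (simp del: of_nat_Suc fact_Suc)
  qed
  finally show ?case .
qed

theorem mainTheorem8:
  fixes m :: nat
  assumes "m \<ge> 1"
  shows "(fps_deriv ^^ (m+1)) (hist_egf m) = (hist_egf m)^2
         \<and> (\<forall>k\<le>m. fps_nth ((fps_deriv ^^ k) (hist_egf m)) 0 = 1)"
proof -
  define a where "a n = real (g m 0 (n + m))" for n
  have H: "hist_egf m = Abs_fps (\<lambda>n. a n / fact n)"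
    by (simp add: hist_egf_def hist_count_g a_def)
  have 1: "(fps_deriv ^^ (m+1)) (hist_egf m) = (hist_egf m)^2"
  proof (rule fps_ext)
    fix n
    have "fps_nth ((fps_deriv ^^ (m+1)) (hist_egf m)) n = a (n + (m+1)) / fact n"
      unfolding H deriv_egf by simp
    also have "\<dots> = (\<Sum>k\<le>n. real (n choose k) * a k * a (n-k)) / fact n"
    proof -
      have e: "n + (m+1) + m = n + 2*m + 1" by simp
      have "a (n + (m+1)) = real (g m 0 (n + 2*m + 1))" unfolding a_def by (simp only: e)
      also have "\<dots> = (\<Sum>k\<le>n. real (n choose k) * a k * a (n-k))"
        unfolding g_rec[OF assms] a_def by simp
      finally show ?thesis by simp
    qed
    also have "\<dots> = (\<Sum>k\<le>n. (a k / fact k) * (a (n-k) / fact (n-k)))"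
      unfolding sum_divide_distrib
      by (rule sum.cong) (simp_all add: binomial_fact field_simps)
    also have "\<dots> = fps_nth ((hist_egf m)^2) n"
      unfolding H power2_eq_square fps_mult_nth by (simp add: atLeast0AtMost)
    finally show "fps_nth ((fps_deriv ^^ (m+1)) (hist_egf m)) n = fps_nth ((hist_egf m)^2) n" .
  qed
  have 2: "fps_nth ((fps_deriv ^^ k) (hist_egf m)) 0 = 1" if "k \<le> m" for k
  proof -
    have "fps_nth ((fps_deriv ^^ k) (hist_egf m)) 0 = a k"
      unfolding H deriv_egf by simp
    also have "\<dots> = 1" unfolding a_def using g_chain1[of 0 "k+m" m] that assms by simp
    finally show ?thesis .
  qed
  show ?thesis using 1 2 by blast
qed

end
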